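(* Every $2$-connected finitely separable graph is countable.
   Context: Two vertices of a graph $G$ are finitely separable if some finite set of edges of $G$ separates them in $G$. A graph is finitely separable if every pair of its vertices is finitely separable. *)

theory Defs
  imports Main "HOL-Library.Countable_Set"
begin

definition is_graph :: "'a set \<Rightarrow> 'a set set \<Rightarrow> bool" where
  "is_graph V E \<longleftrightarrow> (\<forall>e\<in>E. \<exists>u v. u \<in> V \<and> v \<in> V \<and> u \<noteq> v \<and> e = {u, v})"

definition joined :: "'a set set \<Rightarrow> 'a \<Rightarrow> 'a \<Rightarrow> bool" where
  "joined E u v \<longleftrightarrow> (\<lambda>x y. {x, y} \<in> E)\<^sup>*\<^sup>* u v"

definition graph_connected :: "'a set \<Rightarrow> 'a set set \<Rightarrow> bool" where
  "graph_connected V E \<longleftrightarrow> V \<noteq> {} \<and> (\<forall>u\<in>V. \<forall>v\<in>V. joined E u v)"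

definition two_connected :: "'a set \<Rightarrow> 'a set set \<Rightarrow> bool" where
  "two_connected V E \<longleftrightarrow>
     (\<exists>a b c. a \<in> V \<and> b \<in> V \<and> c \<in> V \<and> a \<noteq> b \<and> a \<noteq> c \<and> b \<noteq> c) \<and>
     graph_connected V E \<and>
     (\<forall>x\<in>V. graph_connected (V - {x}) {e\<in>E. x \<notin> e})"

definition finitely_separable_pair :: "'a set set \<Rightarrow> 'a \<Rightarrow> 'a \<Rightarrow> bool" where
  "finitely_separable_pair E u v \<longleftrightarrow> (\<exists>F. F \<subseteq> E \<and> finite F \<and> \<not> joined (E - F) u v)"

definition finitely_separable :: "'a set \<Rightarrow> 'a set set \<Rightarrow> bool" where
  "finitely_separable V E \<longleftrightarrow>
     (\<forall>u\<in>V. \<forall>v\<in>V. u \<noteq> v \<longrightarrow> finitely_separable_pair E u v)"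

end

theory Submission
  imports Defs
begin

lemma countable_reach:
  assumes "\<And>c. R\<^sup>*\<^sup>* a c \<Longrightarrow> countable {d. R c d}"
  shows "countable {d. R\<^sup>*\<^sup>* a d}"
proof -
  have "countable {d. (R^^n) a d}" for n
  proof (induction n)
    case 0 then show ?case by simp
  next
    case (Suc n)
    have "{d. (R^^Suc n) a d} = (\<Union>c\<in>{c. (R^^n) a c}. {d. R c d})"
      by auto
    moreover have "countable {d. R c d}" if "(R^^n) a c" for c
      using assms that by (meson relpowp_imp_rtranclp)
    ultimately show ?case using Suc by (auto intro!: countable_UN)
  qed
  moreover have "{d. R\<^sup>*\<^sup>* a d} = (\<Union>n. {d. (R^^n) a d})"
    by (auto simp: rtranclp_power)
  ultimately show ?thesis by auto
qed

lemma edge_in_V: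
  assumes "is_graph V E" "e \<in> E" "z \<in> e" shows "z \<in> V"
proof -
  obtain u v where "u \<in> V" "v \<in> V" "e = {u,v}" using assms(1,2) unfolding is_graph_def by meson
  then show ?thesis using assms(3) by blast
qed

lemma edge_finite:
  assumes "is_graph V E" "e \<in> E" shows "finite e"
proof -
  obtain u v where "e = {u,v}" using assms(1,2) unfolding is_graph_def by meson
  then show ?thesis by simp
qed

lemma edge_ne:
  assumes "is_graph V E" "{a,b} \<in> E" shows "a \<noteq> b"
proof -
  obtain u v where "u \<noteq> v" "{a,b} = {u,v}" using assms(1,2) unfolding is_graph_def by meson
  then show ?thesis by (auto simp: doubleton_eq_iff)
qed

lemma degree_countable:
  fixes V :: "'a set" and E :: "'a set set"
  assumes g: "is_graph V E"
    and tc: "two_connected V E"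
    and fs: "finitely_separable V E"
    and xV: "x \<in> V"
  shows "countable {z. {x,z} \<in> E}"
proof -
  obtain c0 where c0: "c0 \<in> V" "c0 \<noteq> x"
    using tc unfolding two_connected_def by blast
  define F where "F c = (SOME F. F \<subseteq> E \<and> finite F \<and> \<not> joined (E - F) x c)" for c
  have Fp: "F c \<subseteq> E \<and> finite (F c) \<and> \<not> joined (E - F c) x c" if "c \<in> V" "c \<noteq> x" for c
  proof -
    have "\<exists>F. F \<subseteq> E \<and> finite F \<and> \<not> joined (E - F) x c"
      using fs xV that unfolding finitely_separable_def finitely_separable_pair_def by metis
    then show ?thesis unfolding F_def by (rule someI_ex)
  qed
  define R where "R c d = (d \<in> \<Union>(F c) \<and> d \<noteq> x)" for c d
  define C where "C = {d. R\<^sup>*\<^sup>* c0 d}"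
  have inv: "d \<in> V \<and> d \<noteq> x" if "R\<^sup>*\<^sup>* c0 d" for d
    using that
  proof (induction rule: rtranclp_induct)
    case base then show ?case using c0 by simp
  next
    case (step y z)
    have "y \<in> V" "y \<noteq> x" using step.IH by auto
    then have "F y \<subseteq> E" using Fp[of y] by simp
    from step(2) have zU: "z \<in> \<Union>(F y)" and zx: "z \<noteq> x" unfolding R_def by auto
    from zU obtain e where "e \<in> F y" "z \<in> e" by (rule UnionE)
    then have "e \<in> E" using \<open>F y \<subseteq> E\<close> by blast
    then have "z \<in> V" using edge_in_V[OF g] \<open>z \<in> e\<close> by simp
    then show ?case using zx by simp
  qed
  have finU: "finite (\<Union>(F c))" if "c \<in> V" "c \<noteq> x" for c
  proof -
    have "finite e" if "e \<in> F c" for e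
      using that Fp[of c] \<open>c \<in> V\<close> \<open>c \<noteq> x\<close> edge_finite[OF g] by blast
    moreover have "finite (F c)" using Fp[of c] that by blast
    ultimately show ?thesis by blast
  qed
  have cC: "countable C"
    unfolding C_def
  proof (rule countable_reach)
    fix c assume "R\<^sup>*\<^sup>* c0 c"
    then have "c \<in> V" "c \<noteq> x" using inv by auto
    then have "finite (\<Union>(F c))" by (rule finU)
    then show "countable {d. R c d}" unfolding R_def
      by (rule countable_subset[rotated, OF countable_finite]) auto
  qed
  define U where "U = (\<Union>c\<in>C. F c)"
  have cU: "countable U"
    unfolding U_def
  proof (rule countable_UN[OF cC])
    fix c assume "c \<in> C"
    then have "c \<in> V" "c \<noteq> x" using inv C_def by auto
    then show "countable (F c)" using Fp by (simp add: countable_finite)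
  qed
  have cUU: "countable (\<Union>U)"
  proof -
    have "\<Union>U = (\<Union>e\<in>U. e)" by simp
    moreover have "countable (\<Union>e\<in>U. e)"
    proof (rule countable_UN[OF cU])
    fix e assume "e \<in> U"
    then obtain c where "c \<in> C" "e \<in> F c" unfolding U_def by blast
    then have "c \<in> V" "c \<noteq> x" using inv C_def by auto
    then have "e \<in> E" using Fp \<open>e \<in> F c\<close> by blast
    then show "countable e" using edge_finite[OF g] by (auto intro: countable_finite)
    qed
    ultimately show ?thesis by simp
  qed
  have sub: "{z. {x,z} \<in> E} \<subseteq> \<Union>U"
  proof
    fix z assume "z \<in> {z. {x,z} \<in> E}"
    then have xz: "{x,z} \<in> E" by simp
    show "z \<in> \<Union>U"
    proof (rule ccontr)
      assume nz: "z \<notin> \<Union>U"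
      have nF: "{x,z} \<notin> F c" if "c \<in> C" for c
        using nz that unfolding U_def by blast
      have zV: "z \<in> V" "z \<noteq> x" using xz edge_in_V[OF g xz] edge_ne[OF g xz] by auto
      define E' where "E' = {e\<in>E. x \<notin> e}"
      have "graph_connected (V - {x}) E'"
        using tc xV unfolding two_connected_def E'_def by blast
      then have jz: "joined E' z c0" using zV c0 unfolding graph_connected_def by blast
      have P: "w \<notin> C \<and> (\<forall>c\<in>C. joined (E - F c) x w)" if "joined E' z w" for w
        using that unfolding joined_def
      proof (induction rule: rtranclp_induct)
        case base
        have J: "joined (E - F c) x z" if "c \<in> C" for c
          using nF[OF that] xz unfolding joined_def by (auto intro: r_into_rtranclp)
        moreover have "z \<notin> C"
        proof
          assume "z \<in> C"
          then show False using J[of z] Fp[of z] zV by blast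
        qed
        ultimately show ?case unfolding joined_def by blast
      next
        case (step w w')
        have e: "{w,w'} \<in> E" "x \<noteq> w" "x \<noteq> w'" using step(2) unfolding E'_def by auto
        have J: "joined (E - F c) x w'" if "c \<in> C" for c
        proof -
          have "{w,w'} \<notin> F c"
          proof
            assume "{w,w'} \<in> F c"
            then have "R c w" unfolding R_def using e by blast
            then have "w \<in> C" using that unfolding C_def by (auto intro: rtranclp.rtrancl_into_rtrancl)
            then show False using step by blast
          qed
          then have "{w,w'} \<in> E - F c" using e by blast
          moreover have "joined (E - F c) x w" using step(3) that unfolding joined_def by blast
          ultimately show ?thesis unfolding joined_def by (auto intro: rtranclp.rtrancl_into_rtrancl)
        qed
        moreover have "w' \<notin> C"
        proof
          assume "w' \<in> C"
          then have "w' \<in> V" "w' \<noteq> x" using inv C_def by auto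
          then show False using J[OF \<open>w' \<in> C\<close>] Fp[of w'] by blast
        qed
        ultimately show ?case unfolding joined_def by blast
      qed
      have "c0 \<in> C" unfolding C_def by simp
      then show False using P[OF jz] by blast
    qed
  qed
  show ?thesis using countable_subset[OF sub cUU] .
qed

theorem mainTheorem4:
  fixes V :: "'a set" and E :: "'a set set"
  assumes "is_graph V E"
    and "two_connected V E"
    and "finitely_separable V E"
  shows "countable V"
proof -
  have gc: "graph_connected V E" using assms(2) unfolding two_connected_def by simp
  then have Vne: "V \<noteq> {}" and allj: "\<forall>u\<in>V. \<forall>v\<in>V. joined E u v"
    unfolding graph_connected_def by simp_all
  from Vne obtain v0 where v0: "v0 \<in> V" by blast
  have deg: "countable {d. {c,d} \<in> E}" for c
  proof (cases "c \<in> V")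
    case True show ?thesis by (rule degree_countable[OF assms True])
  next
    case False
    then have "{d. {c,d} \<in> E} = {}" using edge_in_V[OF assms(1)] by blast
    then show ?thesis by simp
  qed
  have "countable {d. (\<lambda>x y. {x, y} \<in> E)\<^sup>*\<^sup>* v0 d}"
    by (rule countable_reach, rule deg)
  moreover have "V \<subseteq> {d. (\<lambda>x y. {x, y} \<in> E)\<^sup>*\<^sup>* v0 d}"
  proof
    fix v assume "v \<in> V"
    then have "joined E v0 v" using allj v0 by simp
    then show "v \<in> {d. (\<lambda>x y. {x, y} \<in> E)\<^sup>*\<^sup>* v0 d}" unfolding joined_def by simp
  qed
  ultimately show ?thesis by (rule countable_subset[rotated])
qed

end
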